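(* Let $L$ be a subspace of $\bigwedge^{k}V$ and $j\leq n$, and let $K$ be the largest subspace of $\bigwedge^{k-1}V^{(j)}$ such that $e_j\wedge K\subseteq L$. Suppose $L$ is monomial with respect to $e_j$, i.e. $L=\big(L\cap\bigwedge^{k}V^{(j)}\big)\oplus\big(L\cap(e_{j}\wedge\bigwedge^{k-1}V^{(j)})\big)$, and let $1\leq i<j$. Then \[ N_{j\to i}L=\left(\Big(L\cap\bigwedge^{k}V^{(j)}\Big)+\left(e_{i}\wedge K\right)\right)\oplus\left(e_{j}\wedge K'\right), \] where $K'$ is the largest subspace of $K$ such that $e_{i}\wedge K'\subseteq L$.
   Context: $\mathbb{F}$ is a field (assumed throughout the paper, for expository purposes, to have characteristic not $2$), $V$ is an $n$-dimensional $\mathbb{F}$-vector space with a fixed basis $e_1,\dots,e_n$, and $\bigwedge V$ its exterior algebra. For $j\in[n]$, $V^{(j)}$ is the span of $\{e_h:h\neq j\}$, and $\bigwedge V^{(j)}$ is viewed as a subalgebra of $\bigwedge V$. Slow shift: for distinct $i,j\in[n]$ and nonzero $m\in\bigwedge^kV$, write uniquely $m=x+e_j\wedge y$ with $x\in\bigwedge^kV^{(j)}$, $y\in\bigwedge^{k-1}V^{(j)}$, and set $N_{j\to i}m=x+e_i\wedge y$ if this is nonzero, and $N_{j\to i}m=e_j\wedge y$ otherwise (the limit as $t\to0$ of the projective action of the linear map $e_j\mapsto e_i+te_j$ fixing the other $e_h$). For a subspace $L$ of $\bigwedge^kV$, $N_{j\to i}L$ is the span of $\{N_{j\to i}m:m\in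 L\setminus\{0\}\}$; it has the same dimension as $L$. *)

theory Defs
  imports Main "HOL.Modules" "HOL-Library.Function_Algebras"
begin

text \<open>Model of the exterior algebra of V = F^n with basis e_1..e_n:
  an element is a coefficient function on finite index sets S \<subseteq> {1..n};
  the function m represents sum over S of (m S) e_S, where e_S is the wedge of the
  e_s (s in S) in increasing order.\<close>

type_synonym 'a ext = "nat set \<Rightarrow> 'a"

definition escale :: "'a::field \<Rightarrow> 'a ext \<Rightarrow> 'a ext" where
  "escale c m = (\<lambda>T. c * m T)"

interpretation ext: module "escale :: 'a::field \<Rightarrow> 'a ext \<Rightarrow> 'a ext"
  by unfold_locales (auto simp: escale_def algebra_simps fun_eq_iff)

abbreviation ext_subspace :: "'a::field ext set \<Rightarrow> bool" where
  "ext_subspace S \<equiv> ext.subspace S"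

abbreviation ext_span :: "'a::field ext set \<Rightarrow> 'a ext set" where
  "ext_span S \<equiv> ext.span S"

definition wedgek :: "nat \<Rightarrow> nat \<Rightarrow> 'a::field ext set" where
  "wedgek n k = {m. \<forall>T. m T \<noteq> 0 \<longrightarrow> T \<subseteq> {1..n} \<and> card T = k}"

text \<open>The k-th exterior power of V^(j) (span of e_h, h \<noteq> j).\<close>
definition wedgek_skip :: "nat \<Rightarrow> nat \<Rightarrow> nat \<Rightarrow> 'a::field ext set" where
  "wedgek_skip n j k = {m \<in> wedgek n k. \<forall>T. m T \<noteq> 0 \<longrightarrow> j \<notin> T}"

definition wedge_e :: "nat \<Rightarrow> 'a::field ext \<Rightarrow> 'a ext" where
  "wedge_e i y = (\<lambda>T. if i \<in> T then (-1) ^ card {s\<in>T. s < i} * y (T - {i}) else 0)"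

text \<open>Decomposition m = x + e_j \<and> y with x, y not involving e_j.\<close>
definition xpart :: "nat \<Rightarrow> 'a::field ext \<Rightarrow> 'a ext" where
  "xpart j m = (\<lambda>T. if j \<in> T then 0 else m T)"

definition ypart :: "nat \<Rightarrow> 'a::field ext \<Rightarrow> 'a ext" where
  "ypart j m = (\<lambda>S. if j \<in> S then 0 else (-1) ^ card {s \<in> insert j S. s < j} * m (insert j S))"

definition Nshift :: "nat \<Rightarrow> nat \<Rightarrow> 'a::field ext \<Rightarrow> 'a ext" where
  "Nshift j i m = (let z = xpart j m + wedge_e i (ypart j m)
                   in if z \<noteq> 0 then z else wedge_e j (ypart j m))"

definition Nshift_space :: "nat \<Rightarrow> nat \<Rightarrow> 'a::field ext set \<Rightarrow> 'a ext set" where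
  "Nshift_space j i L = ext_span (Nshift j i ` (L - {0}))"

definition set_plus :: "'a::field ext set \<Rightarrow> 'a ext set \<Rightarrow> 'a ext set" where
  "set_plus A B = {a + b | a b. a \<in> A \<and> b \<in> B}"

definition is_direct_sum :: "'a::field ext set \<Rightarrow> 'a ext set \<Rightarrow> 'a ext set \<Rightarrow> bool" where
  "is_direct_sum M A B \<longleftrightarrow> M = set_plus A B \<and> A \<inter> B = {0}"

end

theory Submission
  imports Defs
begin

definition nojs :: "nat \<Rightarrow> 'a::field ext \<Rightarrow> bool" where
  "nojs j m \<longleftrightarrow> (\<forall>T. m T \<noteq> 0 \<longrightarrow> j \<notin> T)"

lemma we_add: "wedge_e i (y + z) = wedge_e i y + wedge_e i (z::'a::field ext)"
  by (auto simp: wedge_e_def fun_eq_iff algebra_simps)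
lemma we_scale: "wedge_e i (escale c y) = escale c (wedge_e i (y::'a::field ext))"
  by (auto simp: wedge_e_def escale_def fun_eq_iff algebra_simps)
lemma we_zero[simp]: "wedge_e i (0::'a::field ext) = 0"
  by (auto simp: wedge_e_def fun_eq_iff)
lemma we_neg: "wedge_e i (- y) = - wedge_e i (y::'a::field ext)"
  by (auto simp: wedge_e_def fun_eq_iff)

lemma skip_nojs: "m \<in> wedgek_skip n j k \<Longrightarrow> nojs j m"
  by (auto simp: wedgek_skip_def nojs_def)

lemma nojs_add: "nojs j a \<Longrightarrow> nojs j b \<Longrightarrow> nojs j (a + b)"
  by (auto simp: nojs_def) (metis add.right_neutral)

lemma we_nojs: "nojs j y \<Longrightarrow> i \<noteq> j \<Longrightarrow> nojs j (wedge_e i y)"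
  by (auto simp: nojs_def wedge_e_def split: if_splits)

lemma xpart_add: "xpart j (a + b) = xpart j a + xpart j (b::'a::field ext)"
  by (auto simp: xpart_def fun_eq_iff)
lemma ypart_add: "ypart j (a + b) = ypart j a + ypart j (b::'a::field ext)"
  by (auto simp: ypart_def fun_eq_iff algebra_simps)
lemma xpart_nojs: "nojs j a \<Longrightarrow> xpart j a = a"
  by (auto simp: xpart_def fun_eq_iff nojs_def)
lemma ypart_nojs: "nojs j a \<Longrightarrow> ypart j a = 0"
  by (auto simp: ypart_def fun_eq_iff nojs_def)
lemma xpart_we: "xpart j (wedge_e j y) = 0"
  by (auto simp: xpart_def wedge_e_def fun_eq_iff)
lemma ypart_we: "nojs j y \<Longrightarrow> ypart j (wedge_e j (y::'a::field ext)) = y"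
proof -
  assume a: "nojs j y"
  show ?thesis
  proof (rule ext)
    fix S
    show "ypart j (wedge_e j y) S = y S"
    proof (cases "j \<in> S")
      case True then show ?thesis using a by (auto simp: ypart_def nojs_def)
    next
      case False
      then have "insert j S - {j} = S" by auto
      then show ?thesis using False
        by (simp add: ypart_def wedge_e_def power_mult_distrib[symmetric] flip: mult.assoc)
    qed
  qed
qed

lemma we_j_nojs_disj: "nojs j x \<Longrightarrow> x = wedge_e j y \<Longrightarrow> x = 0"
  by (auto simp: nojs_def wedge_e_def fun_eq_iff split: if_splits)

lemma we_j_inj0: "nojs j y \<Longrightarrow> wedge_e j y = 0 \<Longrightarrow> y = (0::'a::field ext)"
  by (metis ypart_we ypart_nojs nojs_def zero_fun_def)


lemma skip_subspace: "ext_subspace (wedgek_skip n j m :: 'a::field ext set)"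
  unfolding ext.subspace_def
proof (intro conjI ballI allI)
  show "0 \<in> wedgek_skip n j m" by (simp add: wedgek_skip_def wedgek_def)
next
  fix x y :: "'a ext" assume x: "x \<in> wedgek_skip n j m" and y: "y \<in> wedgek_skip n j m"
  have "x T \<noteq> 0 \<or> y T \<noteq> 0" if "(x + y) T \<noteq> 0" for T
    using that by auto
  then show "x + y \<in> wedgek_skip n j m" using x y
    unfolding wedgek_skip_def wedgek_def by blast
next
  fix c :: 'a and x :: "'a ext" assume x: "x \<in> wedgek_skip n j m"
  then show "escale c x \<in> wedgek_skip n j m"
    unfolding wedgek_skip_def wedgek_def by (auto simp: escale_def)
qed

lemma we_image_sub: "ext_subspace (X::'a::field ext set) \<Longrightarrow> ext_subspace (wedge_e i ` X)"
  unfolding ext.subspace_def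
proof (intro conjI ballI allI)
  assume X: "0 \<in> X \<and> (\<forall>x\<in>X. \<forall>y\<in>X. x + y \<in> X) \<and> (\<forall>c. \<forall>x\<in>X. escale c x \<in> X)"
  show "0 \<in> wedge_e i ` X" using X we_zero by (metis image_eqI)
  fix x y assume "x \<in> wedge_e i ` X" "y \<in> wedge_e i ` X"
  then show "x + y \<in> wedge_e i ` X" using X by (auto simp: we_add[symmetric])
next
  fix c x
  assume X: "0 \<in> X \<and> (\<forall>x\<in>X. \<forall>y\<in>X. x + y \<in> X) \<and> (\<forall>c. \<forall>x\<in>X. escale c x \<in> X)"
    and "x \<in> wedge_e i ` X"
  then show "escale c x \<in> wedge_e i ` X" by (auto simp: we_scale[symmetric])
qed

lemma sp_sub:
  assumes X: "ext_subspace (X::'a::field ext set)" and Y: "ext_subspace Y"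
  shows "ext_subspace (set_plus X Y)"
  unfolding ext.subspace_def
proof (intro conjI ballI allI)
  have "0 \<in> X" "0 \<in> Y" using X Y ext.subspace_0 by blast+
  then have "(0::'a ext) + 0 \<in> set_plus X Y" unfolding set_plus_def by blast
  then show "0 \<in> set_plus X Y" by simp
  fix x y assume "x \<in> set_plus X Y" "y \<in> set_plus X Y"
  then obtain a b c d where "a \<in> X" "b \<in> Y" "c \<in> X" "d \<in> Y" "x = a + b" "y = c + d"
    unfolding set_plus_def by blast
  moreover have "a + b + (c + d) = (a + c) + (b + d)" by (simp add: algebra_simps)
  moreover have "a + c \<in> X" using X \<open>a \<in> X\<close> \<open>c \<in> X\<close> by (rule ext.subspace_add)
  moreover have "b + d \<in> Y" using Y \<open>b \<in> Y\<close> \<open>d \<in> Y\<close> by (rule ext.subspace_add)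
  ultimately have "x + y = (a + c) + (b + d) \<and> a + c \<in> X \<and> b + d \<in> Y" by simp
  then show "x + y \<in> set_plus X Y" unfolding set_plus_def by blast
next
  fix c x assume "x \<in> set_plus X Y"
  then obtain a b where "a \<in> X" "b \<in> Y" "x = a + b"
    unfolding set_plus_def by blast
  moreover have "escale c (a + b) = escale c a + escale c b" by (rule ext.scale_right_distrib)
  moreover have "escale c a \<in> X" using X \<open>a \<in> X\<close> by (rule ext.subspace_scale)
  moreover have "escale c b \<in> Y" using Y \<open>b \<in> Y\<close> by (rule ext.subspace_scale)
  ultimately have "escale c x = escale c a + escale c b \<and> escale c a \<in> X \<and> escale c b \<in> Y" by simp
  then show "escale c x \<in> set_plus X Y" unfolding set_plus_def by blast
qed

theorem lemma3p5:
  fixes L :: "'a::field ext set" and n k i j :: nat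
  assumes char: "(2::'a) \<noteq> 0"
    and L_sub: "L \<subseteq> wedgek n k" and L_space: "ext_subspace L"
    and ij: "1 \<le> i" "i < j" "j \<le> n"
    and mono: "is_direct_sum L (L \<inter> wedgek_skip n j k)
                  (L \<inter> wedge_e j ` wedgek_skip n j (k - 1))"
  defines "K \<equiv> GREATEST K. ext_subspace K \<and> K \<subseteq> wedgek_skip n j (k - 1)
                             \<and> wedge_e j ` K \<subseteq> L"
  defines "K' \<equiv> GREATEST K'. ext_subspace K' \<and> K' \<subseteq> K \<and> wedge_e i ` K' \<subseteq> L"
  shows "is_direct_sum (Nshift_space j i L)
           (set_plus (L \<inter> wedgek_skip n j k) (wedge_e i ` K))
           (wedge_e j ` K')"
proof -
  have inj: "i \<noteq> j" using ij by simp
  define A where "A = L \<inter> wedgek_skip n j k"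
  define Ks where "Ks = {y \<in> wedgek_skip n j (k - 1). wedge_e j y \<in> L}"
  define Ks' where "Ks' = {y \<in> Ks. wedge_e i y \<in> L}"
  have skip_sub: "ext_subspace (wedgek_skip n j m :: 'a ext set)" for m
    by (rule skip_subspace)
  have subA: "ext_subspace A" unfolding A_def
    using L_space skip_sub by (rule ext.subspace_inter)
  have subKs: "ext_subspace Ks"
    using L_space skip_sub[of "k-1"] unfolding Ks_def ext.subspace_def
    by (auto simp: we_add we_scale)
  have subKs': "ext_subspace Ks'"
    using L_space subKs unfolding Ks'_def ext.subspace_def
    by (auto simp: we_add we_scale)
  have KK: "K = Ks" unfolding K_def
    by (rule Greatest_equality) (use subKs in \<open>auto simp: Ks_def\<close>)
  have KK': "K' = Ks'" unfolding K'_def KK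
    by (rule Greatest_equality) (use subKs' in \<open>auto simp: Ks'_def\<close>)
  have Ks_nojs: "y \<in> Ks \<Longrightarrow> nojs j y" for y unfolding Ks_def by (auto intro: skip_nojs)
  have A_nojs: "a \<in> A \<Longrightarrow> nojs j a" for a unfolding A_def by (auto intro: skip_nojs)
  define R where "R = set_plus (set_plus A (wedge_e i ` Ks)) (wedge_e j ` Ks')"
  have Rmem: "a + wedge_e i y + wedge_e j y' \<in> R" if "a \<in> A" "y \<in> Ks" "y' \<in> Ks'" for a y y'
    using that unfolding R_def set_plus_def by blast
  have subR: "ext_subspace R"
  proof -
    have "ext_subspace (wedge_e i ` Ks)"
      using subKs by (rule we_image_sub)
    moreover have "ext_subspace (wedge_e j ` Ks')"
      using subKs' by (rule we_image_sub)
    moreover have "ext_subspace (set_plus X Y)" if "ext_subspace X" "ext_subspace Y" for X Y :: "'a ext set"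
      using that by (rule sp_sub)
    ultimately show ?thesis using subA unfolding R_def by blast
  qed
  have decomp: "\<exists>a y. a \<in> A \<and> y \<in> Ks \<and> m = a + wedge_e j y" if "m \<in> L" for m
  proof -
    from mono that obtain a b where "a \<in> A" "b \<in> L \<inter> wedge_e j ` wedgek_skip n j (k - 1)" "m = a + b"
      unfolding is_direct_sum_def set_plus_def A_def by blast
    then show ?thesis unfolding Ks_def by blast
  qed
  have N1: "Nshift j i m \<in> R" if mL0: "m \<in> L" for m
  proof -
    obtain a y where ay: "a \<in> A" "y \<in> Ks" "m = a + wedge_e j y" using decomp[OF mL0] by blast
    have xp: "xpart j m = a" and yp: "ypart j m = y"
      using ay A_nojs Ks_nojs by (simp_all add: xpart_add ypart_add xpart_nojs ypart_nojs xpart_we ypart_we)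
    show ?thesis
    proof (cases "a + wedge_e i y = 0")
      case False
      then have "Nshift j i m = a + wedge_e i y + wedge_e j 0" by (simp add: Nshift_def Let_def xp yp)
      moreover have "0 \<in> Ks'" using subKs' ext.subspace_0 by blast
      ultimately show ?thesis using Rmem[of a y 0] ay by simp
    next
      case True
      then have "wedge_e i y = - a" by (simp add: add_eq_0_iff)
      moreover have "a \<in> L" using ay A_def by simp
      ultimately have "wedge_e i y \<in> L" using ext.subspace_neg[OF L_space \<open>a \<in> L\<close>] by simp
      then have "y \<in> Ks'" using ay Ks'_def by simp
      moreover have "Nshift j i m = 0 + wedge_e i 0 + wedge_e j y"
        using True by (simp add: Nshift_def Let_def xp yp)
      moreover have "0 \<in> A" "0 \<in> Ks" using subA subKs ext.subspace_0 by blast+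
      ultimately show ?thesis using Rmem[of 0 0 y] by simp
    qed
  qed
  have S1: "Nshift_space j i L \<subseteq> R"
    unfolding Nshift_space_def using N1 subR by (intro ext.span_minimal) auto
  let ?S = "Nshift_space j i L"
  have subS: "ext_subspace ?S" unfolding Nshift_space_def by (rule ext.subspace_span)
  have inS: "Nshift j i m \<in> ?S" if "m \<in> L" "m \<noteq> 0" for m
    using that unfolding Nshift_space_def by (intro ext.span_base) auto
  have Ain: "a \<in> ?S" if "a \<in> A" for a
  proof (cases "a = 0")
    case True then show ?thesis using subS ext.subspace_0 by blast
  next
    case False
    have "Nshift j i a = a" using A_nojs[OF that] False
      by (simp add: Nshift_def Let_def xpart_nojs ypart_nojs)
    then show ?thesis using inS[of a] that False A_def by simp
  qed
  have Kin: "wedge_e i y \<in> ?S" if "y \<in> Ks" for y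
  proof (cases "wedge_e i y = 0")
    case True then show ?thesis using subS ext.subspace_0 by simp
  next
    case False
    have yn: "y \<noteq> 0" using False by auto
    have "wedge_e j y \<noteq> 0" using yn we_j_inj0 Ks_nojs[OF that] by blast
    moreover have "Nshift j i (wedge_e j y) = wedge_e i y" using False Ks_nojs[OF that]
      by (simp add: Nshift_def Let_def xpart_we ypart_we)
    ultimately show ?thesis using inS[of "wedge_e j y"] that Ks_def by simp
  qed
  have K'in: "wedge_e j y \<in> ?S" if "y \<in> Ks'" for y
  proof (cases "y = 0")
    case True then show ?thesis using subS ext.subspace_0 by simp
  next
    case False
    have yK: "y \<in> Ks" and yL: "wedge_e i y \<in> L" "wedge_e j y \<in> L" using that by (auto simp: Ks'_def Ks_def)
    define m where "m = - wedge_e i y + wedge_e j y"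
    have mL: "m \<in> L" unfolding m_def
      by (rule ext.subspace_add[OF L_space ext.subspace_neg[OF L_space yL(1)] yL(2)])
    have nj: "nojs j (- wedge_e i y)" using we_nojs[OF Ks_nojs[OF yK] inj]
      by (auto simp: nojs_def)
    have xp: "xpart j m = - wedge_e i y" and yp: "ypart j m = y"
      unfolding m_def xpart_add ypart_add xpart_nojs[OF nj] ypart_nojs[OF nj] xpart_we ypart_we[OF Ks_nojs[OF yK]]
      by simp_all
    have "m \<noteq> 0" using yp False by (auto simp: ypart_def)
    moreover have "Nshift j i m = wedge_e j y" by (simp add: Nshift_def Let_def xp yp)
    ultimately show ?thesis using inS[OF mL] by simp
  qed
  have S2: "R \<subseteq> ?S"
  proof
    fix x assume "x \<in> R"
    then obtain a y y' where "a \<in> A" "y \<in> Ks" "y' \<in> Ks'" "x = a + wedge_e i y + wedge_e j y'"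
      unfolding R_def set_plus_def by blast
    then show "x \<in> ?S" using ext.subspace_add[OF subS ext.subspace_add[OF subS Ain Kin] K'in] by simp
  qed
  have disj: "set_plus A (wedge_e i ` Ks) \<inter> wedge_e j ` Ks' = {0}"
  proof -
    have "x = 0" if xx: "x \<in> set_plus A (wedge_e i ` Ks)" "x \<in> wedge_e j ` Ks'" for x
    proof -
      obtain a y where "a \<in> A" "y \<in> Ks" "x = a + wedge_e i y" using xx(1) unfolding set_plus_def by blast
      then have "nojs j x" using nojs_add[OF A_nojs we_nojs[OF Ks_nojs inj]] by simp
      moreover obtain y' where "x = wedge_e j y'" using xx(2) by blast
      ultimately show ?thesis using we_j_nojs_disj by blast
    qed
    moreover have "0 \<in> set_plus A (wedge_e i ` Ks)"
    proof -
      have "0 \<in> A" "0 \<in> Ks" using ext.subspace_0[OF subA] ext.subspace_0[OF subKs] by auto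
      then have "0 + wedge_e i 0 \<in> set_plus A (wedge_e i ` Ks)" unfolding set_plus_def by blast
      then show ?thesis by simp
    qed
    moreover have "0 \<in> wedge_e j ` Ks'"
    proof -
      have "wedge_e j 0 \<in> wedge_e j ` Ks'" using ext.subspace_0[OF subKs'] by blast
      then show ?thesis by simp
    qed
    ultimately show ?thesis by blast
  qed
  show ?thesis unfolding is_direct_sum_def
    using S1 S2 disj by (simp add: KK KK' A_def[symmetric] R_def[symmetric])
qed

end
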